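(* Let $(V,c)$ be a network satisfying the Yang-type inequality with constant $C_{YT}$. Let $\Omega\subset V$ be finite with Dirichlet eigenvalues $\lambda_1\le\cdots\le\lambda_{|\Omega|}$. If $\lambda_k\le1+C_{YT}$ for some $1\le k<|\Omega|$, then $$\sum_{i=1}^k\frac{\lambda_i-\lambda_{\min}}{\lambda_{k+1}-\lambda_i}\ge\frac1{C_{YT}}\sum_{i=1}^k(1-\lambda_i).$$
   Context: A network is a pair $(V,c)$ with $V$ countable and $c:V\times V\to[0,\infty)$ symmetric with $\pi(x)=\sum_yc(x,y)<\infty$; $P(x,y)=c(x,y)/\pi(x)$ and $\Delta f(x)=\sum_yP(x,y)(f(x)-f(y))$, a bounded self-adjoint operator on $L^2(V,\pi)$ (inner product $\sum_x\pi(x)f(x)\overline{g(x)}$) with spectrum in $[0,2]$; $\lambda_{\min}$ is the bottom of its spectrum. For finite $\Omega\subset V$, the Dirichlet eigenvalues $\lambda_1\le\cdots\le\lambda_{|\Omega|}$ of $\Omega$ are the eigenvalues (with multiplicity) of the compression $\Delta_\Omega f=\mathbf 1_\Omega\cdot\Delta f$ on functions vanishing outside $\Omega$. The network satisfies the Yang-type inequality with constant $C_{YT}$ if for every finite $\Omega\subset V$ and every $k<|\Omega|$: $\sum_{i=1}^k(\lambda_{k+1}-\lambda_i)^2(1-\lambda_i)\le C_{YT}\sum_{i=1}^k(\lambda_{k+1}-\lambda_i)(\lambda_i-\lambda_{\min})$. *)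

theory Defs
  imports "HOL-Analysis.Analysis" "HOL-Library.Countable" "Jordan_Normal_Form.Char_Poly"
begin

definition pi_w :: "('v \<Rightarrow> 'v \<Rightarrow> real) \<Rightarrow> 'v \<Rightarrow> real" where
  "pi_w c x = (\<Sum>\<^sub>\<infinity>y. c x y)"

definition network :: "('v::countable \<Rightarrow> 'v \<Rightarrow> real) \<Rightarrow> bool" where
  "network c \<longleftrightarrow> (\<forall>x y. c x y = c y x) \<and> (\<forall>x y. 0 \<le> c x y)
     \<and> (\<forall>x. (c x) summable_on UNIV) \<and> (\<forall>x. 0 < pi_w c x)"

definition trans_P :: "('v \<Rightarrow> 'v \<Rightarrow> real) \<Rightarrow> 'v \<Rightarrow> 'v \<Rightarrow> real" where
  "trans_P c x y = c x y / pi_w c x"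

definition lap :: "('v \<Rightarrow> 'v \<Rightarrow> real) \<Rightarrow> ('v \<Rightarrow> 'b::banach) \<Rightarrow> 'v \<Rightarrow> 'b" where
  "lap c f x = (\<Sum>\<^sub>\<infinity>y. trans_P c x y *\<^sub>R (f x - f y))"

definition l2 :: "('v \<Rightarrow> 'v \<Rightarrow> real) \<Rightarrow> ('v \<Rightarrow> complex) set" where
  "l2 c = {f. (\<lambda>x. pi_w c x * (cmod (f x))\<^sup>2) summable_on UNIV}"

text \<open>Spectrum of Delta on L^2(V,pi): z such that Delta - z I is not a bijection of L^2
  (for the bounded operator Delta this is equivalent to not having a bounded inverse).\<close>
definition lap_spectrum :: "('v \<Rightarrow> 'v \<Rightarrow> real) \<Rightarrow> complex set" where
  "lap_spectrum c = {z. \<not> bij_betw (\<lambda>f x. lap c f x - z * f x) (l2 c) (l2 c)}"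

definition lambda_min :: "('v \<Rightarrow> 'v \<Rightarrow> real) \<Rightarrow> real" where
  "lambda_min c = Inf {t::real. complex_of_real t \<in> lap_spectrum c}"

text \<open>Matrix of the compression Delta_Omega w.r.t. the basis of indicator functions of the
  points of Omega, enumerated by e.\<close>
definition dir_mat :: "('v \<Rightarrow> 'v \<Rightarrow> real) \<Rightarrow> 'v set \<Rightarrow> (nat \<Rightarrow> 'v) \<Rightarrow> real mat" where
  "dir_mat c \<Omega> e = mat (card \<Omega>) (card \<Omega>)
     (\<lambda>(i,j). lap c (\<lambda>y. if y = e j then (1::real) else 0) (e i))"

definition dirichlet_eigs :: "('v \<Rightarrow> 'v \<Rightarrow> real) \<Rightarrow> 'v set \<Rightarrow> (nat \<Rightarrow> real) \<Rightarrow> bool" where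
  "dirichlet_eigs c \<Omega> lam \<longleftrightarrow>
     (\<forall>i j. 1 \<le> i \<longrightarrow> i \<le> j \<longrightarrow> j \<le> card \<Omega> \<longrightarrow> lam i \<le> lam j) \<and>
     (\<exists>e. bij_betw e {..<card \<Omega>} \<Omega> \<and>
          char_poly (dir_mat c \<Omega> e) = (\<Prod>i=1..card \<Omega>. [:- lam i, 1:]))"

definition yang_type :: "('v::countable \<Rightarrow> 'v \<Rightarrow> real) \<Rightarrow> real \<Rightarrow> bool" where
  "yang_type c C \<longleftrightarrow> (\<forall>\<Omega> lam k. finite \<Omega> \<longrightarrow> dirichlet_eigs c \<Omega> lam \<longrightarrow> k < card \<Omega> \<longrightarrow>
      (\<Sum>i=1..k. (lam (k+1) - lam i)\<^sup>2 * (1 - lam i))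
        \<le> C * (\<Sum>i=1..k. (lam (k+1) - lam i) * (lam i - lambda_min c)))"

end

theory Submission
  imports Defs
begin

lemma pair_nonneg:
  fixes ui uj wi wj :: real
  assumes "ui > 0" "uj > 0" "wi \<ge> 0" "wj \<ge> 0" "ui \<le> uj \<Longrightarrow> wi \<le> wj" "uj \<le> ui \<Longrightarrow> wj \<le> wi"
  shows "(ui^2 - uj^2) * wi / uj + (uj^2 - ui^2) * wj / ui \<ge> 0"
proof -
  have e: "(ui^2 - uj^2) * wi / uj + (uj^2 - ui^2) * wj / ui
        = (ui^2 - uj^2) * (wi * ui - wj * uj) / (ui * uj)"
    using assms(1,2) by (simp add: field_simps power2_eq_square)
  have "(ui^2 - uj^2) * (wi * ui - wj * uj) \<ge> 0"
  proof (cases "ui \<le> uj")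
    case True
    then have "wi * ui \<le> wj * uj" using assms by (intro mult_mono) auto
    moreover have "ui^2 \<le> uj^2" using True assms by (intro power_mono) auto
    ultimately show ?thesis by (simp add: mult_nonpos_nonpos)
  next
    case False
    then have "wj * uj \<le> wi * ui" using assms by (intro mult_mono) auto
    moreover have "uj^2 \<le> ui^2" using False assms by (intro power_mono) auto
    ultimately show ?thesis by simp
  qed
  then show ?thesis unfolding e using assms(1,2) by simp
qed

lemma key_ineq:
  fixes u w :: "nat \<Rightarrow> real"
  assumes "finite I" "\<And>i. i \<in> I \<Longrightarrow> u i > 0" "\<And>i. i \<in> I \<Longrightarrow> w i \<ge> 0"
    "\<And>i j. i \<in> I \<Longrightarrow> j \<in> I \<Longrightarrow> u i \<le> u j \<Longrightarrow> w i \<le> w j"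
  shows "(\<Sum>i\<in>I. u i) * (\<Sum>i\<in>I. w i) \<le> (\<Sum>i\<in>I. (u i)^2 * w i) * (\<Sum>i\<in>I. 1 / u i)"
proof -
  define T where "T i j = ((u i)^2 - (u j)^2) * w i / u j" for i j
  define S where "S = (\<Sum>i\<in>I. \<Sum>j\<in>I. T i j)"
  have S2: "S = (\<Sum>i\<in>I. \<Sum>j\<in>I. T j i)" unfolding S_def by (rule sum.swap)
  have "2 * S = (\<Sum>i\<in>I. \<Sum>j\<in>I. T i j) + (\<Sum>i\<in>I. \<Sum>j\<in>I. T j i)"
    using S2 unfolding S_def by linarith
  also have "\<dots> = (\<Sum>i\<in>I. \<Sum>j\<in>I. T i j + T j i)"
    by (simp only: sum.distrib)
  also have "\<dots> \<ge> 0"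
    unfolding T_def using assms by (intro sum_nonneg pair_nonneg) auto
  finally have S0: "S \<ge> 0" by simp
  have "S = (\<Sum>i\<in>I. \<Sum>j\<in>I. (u i)^2 * w i * (1 / u j) - u j * w i)"
    unfolding S_def T_def
    apply (intro sum.cong refl)
    subgoal for i j using assms(2)[of j] by (simp add: field_simps power2_eq_square)
    done
  also have "\<dots> = (\<Sum>i\<in>I. (u i)^2 * w i) * (\<Sum>i\<in>I. 1 / u i) - (\<Sum>i\<in>I. u i) * (\<Sum>i\<in>I. w i)"
  proof -
    have a: "(\<Sum>i\<in>I. \<Sum>j\<in>I. (u i)^2 * w i * (1 / u j)) = (\<Sum>i\<in>I. (u i)^2 * w i) * (\<Sum>i\<in>I. 1 / u i)"
      by (rule sum_product[symmetric])
    have b: "(\<Sum>i\<in>I. \<Sum>j\<in>I. u j * w i) = (\<Sum>i\<in>I. u i) * (\<Sum>i\<in>I. w i)"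
      unfolding sum_product by (rule sum.swap)
    show ?thesis by (simp only: sum_subtractf a b)
  qed
  finally show ?thesis using S0 by simp
qed

theorem corollary5p3:
  fixes c :: "'v::countable \<Rightarrow> 'v \<Rightarrow> real" and C :: real
    and \<Omega> :: "'v set" and lam :: "nat \<Rightarrow> real" and k :: nat
  assumes "network c"
    and "yang_type c C"
    and "0 < C"
    and "finite \<Omega>"
    and "dirichlet_eigs c \<Omega> lam"
    and "1 \<le> k" and "k < card \<Omega>"
    and "lam k \<le> 1 + C"
    and "lam k < lam (k+1)"
  shows "(\<Sum>i=1..k. (lam i - lambda_min c) / (lam (k+1) - lam i))
           \<ge> (1 / C) * (\<Sum>i=1..k. (1 - lam i))"
proof -
  define L where "L = lam (k+1)"
  define m where "m = lambda_min c"
  define I where "I = {1..k}"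
  define u where "u i = L - lam i" for i
  define w where "w i = 1 + C - lam i" for i
  define B where "B = L - m"
  have fI: "finite I" unfolding I_def by simp
  have mono: "\<And>i. i \<in> I \<Longrightarrow> lam i \<le> lam k"
    using assms(5,7) unfolding dirichlet_eigs_def I_def by auto
  have upos: "\<And>i. i \<in> I \<Longrightarrow> u i > 0" using mono assms(9) unfolding u_def L_def by fastforce
  have wnn: "\<And>i. i \<in> I \<Longrightarrow> w i \<ge> 0" using mono assms(8) unfolding w_def by fastforce
  have wmono: "\<And>i j. i \<in> I \<Longrightarrow> j \<in> I \<Longrightarrow> u i \<le> u j \<Longrightarrow> w i \<le> w j"
    unfolding u_def w_def by simp
  have Y: "(\<Sum>i\<in>I. (L - lam i)\<^sup>2 * (1 - lam i)) \<le> C * (\<Sum>i\<in>I. (L - lam i) * (lam i - m))"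
    using assms(2,4,5,7) unfolding yang_type_def I_def L_def m_def by blast
  have e1: "(\<Sum>i\<in>I. (u i)^2 * w i) = (\<Sum>i\<in>I. (L - lam i)\<^sup>2 * (1 - lam i)) + C * (\<Sum>i\<in>I. (u i)^2)"
  proof -
    have "(\<Sum>i\<in>I. (u i)^2 * w i) = (\<Sum>i\<in>I. (L - lam i)\<^sup>2 * (1 - lam i) + C * (u i)^2)"
      by (intro sum.cong refl) (simp add: u_def w_def algebra_simps)
    then show ?thesis by (simp add: sum.distrib sum_distrib_left)
  qed
  have e2: "C * (\<Sum>i\<in>I. (L - lam i) * (lam i - m)) = C * B * (\<Sum>i\<in>I. u i) - C * (\<Sum>i\<in>I. (u i)^2)"
  proof -
    have "(\<Sum>i\<in>I. (L - lam i) * (lam i - m)) = (\<Sum>i\<in>I. B * u i - (u i)^2)"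
      by (intro sum.cong refl) (simp add: u_def B_def algebra_simps power2_eq_square)
    then show ?thesis by (simp add: sum_subtractf sum_distrib_left right_diff_distrib mult.assoc)
  qed
  have Y2: "(\<Sum>i\<in>I. (u i)^2 * w i) \<le> C * B * (\<Sum>i\<in>I. u i)" using Y e1 e2 by linarith
  have K: "(\<Sum>i\<in>I. u i) * (\<Sum>i\<in>I. w i) \<le> (\<Sum>i\<in>I. (u i)^2 * w i) * (\<Sum>i\<in>I. 1 / u i)"
    by (rule key_ineq[OF fI upos wnn wmono])
  have inv_nn: "(\<Sum>i\<in>I. 1 / u i) \<ge> 0" using upos by (intro sum_nonneg) (simp add: less_imp_le)
  have Ine: "I \<noteq> {}" unfolding I_def using assms(6) by auto
  have spos: "(\<Sum>i\<in>I. u i) > 0" using upos fI Ine by (intro sum_pos) auto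
  have "(\<Sum>i\<in>I. u i) * (\<Sum>i\<in>I. w i) \<le> (C * B * (\<Sum>i\<in>I. u i)) * (\<Sum>i\<in>I. 1 / u i)"
    using K Y2 inv_nn mult_right_mono order_trans by blast
  then have W: "(\<Sum>i\<in>I. w i) \<le> C * B * (\<Sum>i\<in>I. 1 / u i)"
    using spos by (simp add: mult.commute mult.left_commute)
  have l: "(\<Sum>i\<in>I. (lam i - m) / (L - lam i)) = B * (\<Sum>i\<in>I. 1 / u i) - real k"
  proof -
    have "(\<Sum>i\<in>I. (lam i - m) / (L - lam i)) = (\<Sum>i\<in>I. B * (1 / u i) - 1)"
      apply (intro sum.cong refl)
      subgoal for i using upos[of i] unfolding u_def B_def by (simp add: field_simps)
      done
    then show ?thesis by (simp add: sum_subtractf sum_distrib_left I_def)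
  qed
  have r: "(1 / C) * (\<Sum>i\<in>I. (1 - lam i)) = (\<Sum>i\<in>I. w i) / C - real k"
  proof -
    have "(\<Sum>i\<in>I. (1 - lam i)) = (\<Sum>i\<in>I. w i) - C * real k"
      unfolding w_def by (simp add: sum_subtractf sum.distrib I_def algebra_simps)
    then show ?thesis using assms(3) by (simp add: field_simps)
  qed
  have "(\<Sum>i\<in>I. w i) / C \<le> B * (\<Sum>i\<in>I. 1 / u i)"
    using W assms(3) by (simp add: divide_le_eq mult.commute mult.left_commute)
  then show ?thesis using l r unfolding I_def L_def m_def by linarith
qed

end
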